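(* Let $n\ge 5$. Then for every $1\le r\le n$, no subset of $N(W_r)$ of size $n-2$ is a doubly resolving set of $L(n)$.
   Context: For $n\ge 5$, $H(n)$ is the graph with vertex set $V_1\cup V_2$, where $V_1=\{v_1,\dots,v_n\}$ and $V_2=\{v_iv_j: 1\le i<j\le n\}$, and $v_r$ is adjacent to $v_iv_j$ iff $r\in\{i,j\}$ (no other edges). $L(n)$ is the line graph of $H(n)$: its vertices are the edges $\{v_r,v_iv_j\}$ of $H(n)$ (with $r\in\{i,j\}$), two being adjacent iff they share an endpoint. For $1\le r\le n$, $W_r$ is the set of vertices of $L(n)$ of the form $\{v_r,v_iv_j\}$; it is a maximal clique of size $n-1$. $N(W_r)$ denotes the set of vertices of $L(n)$ not in $W_r$ adjacent to some vertex of $W_r$, i.e. $N(W_r)=\{\{v_k,v_iv_j\}: k\neq r,\ \{i,j\}=\{r,k\}\}$. For an ordered set $Q=\{q_1,\dots,q_l\}$ of vertices, $r(x|Q)=(d(x,q_1),\dots,d(x,q_l))$ with $d$ the shortest-path distance; $Q$ is a doubly resolving set of $G$ if for any two distinct vertices $x,y$, $r(x|Q)-r(y|Q)\neq\lambda(1,\dots,1)$ for every integer $\lambda$. *)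

theory Defs
  imports Main
begin

text \<open>Vertices of L(n): edges {v_r, v_i v_j} of H(n), encoded as pairs (r, {i,j})
  with {i,j} a 2-subset of {1..n} and r in {i,j}.\<close>
definition Lverts :: "nat \<Rightarrow> (nat \<times> nat set) set" where
  "Lverts n = {(r, e). e \<subseteq> {1..n} \<and> card e = 2 \<and> r \<in> e}"

text \<open>Adjacency in the line graph: distinct edges of H(n) sharing an endpoint
  (the same vertex v_r, or the same vertex v_i v_j).\<close>
definition Ladj :: "nat \<Rightarrow> nat \<times> nat set \<Rightarrow> nat \<times> nat set \<Rightarrow> bool" where
  "Ladj n x y \<longleftrightarrow> x \<in> Lverts n \<and> y \<in> Lverts n \<and> x \<noteq> y \<and>
     (fst x = fst y \<or> snd x = snd y)"

definition Ldist :: "nat \<Rightarrow> nat \<times> nat set \<Rightarrow> nat \<times> nat set \<Rightarrow> nat" where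
  "Ldist n x y = (LEAST k. (Ladj n ^^ k) x y)"

definition Wset :: "nat \<Rightarrow> nat \<Rightarrow> (nat \<times> nat set) set" where
  "Wset n r = {x \<in> Lverts n. fst x = r}"

definition NW :: "nat \<Rightarrow> nat \<Rightarrow> (nat \<times> nat set) set" where
  "NW n r = {y \<in> Lverts n - Wset n r. \<exists>x \<in> Wset n r. Ladj n x y}"

definition doubly_resolving :: "nat \<Rightarrow> (nat \<times> nat set) set \<Rightarrow> bool" where
  "doubly_resolving n Q \<longleftrightarrow> Q \<subseteq> Lverts n \<and>
     (\<forall>x \<in> Lverts n. \<forall>y \<in> Lverts n. x \<noteq> y \<longrightarrow>
        \<not> (\<exists>c::int. \<forall>q \<in> Q. int (Ldist n x q) - int (Ldist n y q) = c))"

end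

theory Submission
  imports Defs
begin

lemma pow2: "(R ^^ 2) x y = (\<exists>z. R x z \<and> R z y)"
  by (auto simp: numeral_2_eq_2 relcompp_apply)

lemma pow3: "(R ^^ 3) x y = (\<exists>z w. R x z \<and> R z w \<and> R w y)"
  by (auto simp: numeral_3_eq_3 relcompp_apply)

lemma Ldist_eqI:
  assumes "(Ladj n ^^ k) x y" "\<And>j. j < k \<Longrightarrow> \<not> (Ladj n ^^ j) x y"
  shows "Ldist n x y = k"
  unfolding Ldist_def
  by (rule Least_equality, fact, meson assms(2) not_less)

lemma card2: "card e = 2 \<Longrightarrow> r \<in> e \<Longrightarrow> a \<in> e \<Longrightarrow> a \<noteq> r \<Longrightarrow> e = {r, a}"
  by (metis card_2_iff empty_iff insert_commute insert_iff)

lemma inL: "r \<in> {1..n} \<Longrightarrow> m \<in> {1..n} \<Longrightarrow> m \<noteq> r \<Longrightarrow> (r, {r, m}) \<in> Lverts n"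
  "r \<in> {1..n} \<Longrightarrow> m \<in> {1..n} \<Longrightarrow> m \<noteq> r \<Longrightarrow> (m, {r, m}) \<in> Lverts n"
  by (auto simp: Lverts_def)

lemma NW_char: "q \<in> NW n r \<Longrightarrow> \<exists>k. q = (k, {r, k}) \<and> k \<noteq> r \<and> k \<in> {1..n} \<and> r \<in> {1..n}"
proof -
  assume q: "q \<in> NW n r"
  obtain k e where qe: "q = (k, e)" by force
  from q obtain x where x: "x \<in> Wset n r" "Ladj n x q" "q \<in> Lverts n" "fst q \<noteq> r"
    unfolding NW_def Wset_def by auto
  have "snd x = e" using x qe unfolding Wset_def Ladj_def by auto
  hence "r \<in> e" "e \<subseteq> {1..n}" using x unfolding Wset_def Lverts_def by auto
  moreover have "k \<in> e" "card e = 2" "k \<noteq> r" using x qe unfolding Lverts_def by auto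
  ultimately show ?thesis using qe card2[of e r k] by auto
qed

lemma NW_mem: "r \<in> {1..n} \<Longrightarrow> k \<in> {1..n} \<Longrightarrow> k \<noteq> r \<Longrightarrow> (k, {r, k}) \<in> NW n r"
  unfolding NW_def Wset_def
  apply (auto simp: inL)
  apply (rule exI[of _ "{r,k}"])
  apply (auto simp: Ladj_def inL)
  done

lemma d2:
  assumes "r \<in> {1..n}" "m \<in> {1..n}" "k \<in> {1..n}" "m \<noteq> r" "k \<noteq> r" "k \<noteq> m"
  shows "Ldist n (r, {r, m}) (k, {r, k}) = 2"
proof (rule Ldist_eqI)
  show "(Ladj n ^^ 2) (r, {r, m}) (k, {r, k})"
    unfolding pow2 using assms
    by (intro exI[of _ "(r, {r,k})"]) (auto simp: Ladj_def inL doubleton_eq_iff)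
  fix j :: nat assume "j < 2"
  then have "j = 0 \<or> j = 1" by auto
  then show "\<not> (Ladj n ^^ j) (r, {r, m}) (k, {r, k})"
    using assms by (auto simp: Ladj_def doubleton_eq_iff)
qed

lemma d3:
  assumes "r \<in> {1..n}" "m \<in> {1..n}" "k \<in> {1..n}" "m \<noteq> r" "k \<noteq> r" "k \<noteq> m"
  shows "Ldist n (m, {r, m}) (k, {r, k}) = 3"
proof (rule Ldist_eqI)
  show "(Ladj n ^^ 3) (m, {r, m}) (k, {r, k})"
    unfolding pow3 using assms
    by (intro exI[of _ "(r, {r,m})"] exI[of _ "(r, {r,k})"]) (auto simp: Ladj_def inL doubleton_eq_iff)
  fix j :: nat assume "j < 3"
  then have "j = 0 \<or> j = 1 \<or> j = 2" by auto
  moreover have "\<not> (Ladj n ^^ 2) (m, {r, m}) (k, {r, k})"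
  proof
    assume "(Ladj n ^^ 2) (m, {r, m}) (k, {r, k})"
    then obtain a e where z: "Ladj n (m, {r, m}) (a, e)" "Ladj n (a, e) (k, {r, k})"
      unfolding pow2 by auto
    then have "a \<in> e" by (auto simp: Ladj_def Lverts_def)
    with z assms show False by (auto simp: Ladj_def doubleton_eq_iff)
  qed
  ultimately show "\<not> (Ladj n ^^ j) (m, {r, m}) (k, {r, k})"
    using assms by (auto simp: Ladj_def doubleton_eq_iff)
qed

theorem lemma3p4:
  fixes n r :: nat and Q :: "(nat \<times> nat set) set"
  assumes "n \<ge> 5" and "1 \<le> r" and "r \<le> n"
    and "Q \<subseteq> NW n r" and "card Q = n - 2"
  shows "\<not> doubly_resolving n Q"
proof
  assume dr: "doubly_resolving n Q"
  have r: "r \<in> {1..n}" using assms by auto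
  have "NW n r \<subseteq> Lverts n" unfolding NW_def by auto
  moreover have "finite (Lverts n)"
  proof -
    have "Lverts n \<subseteq> {1..n} \<times> Pow {1..n}" unfolding Lverts_def by auto
    thus ?thesis by (rule finite_subset) auto
  qed
  ultimately have fin: "finite (NW n r)" by (rule finite_subset)
  have "(\<lambda>k. (k, {r, k})) ` ({1..n} - {r}) \<subseteq> NW n r" using NW_mem[OF r] by blast
  moreover have "card ((\<lambda>k. (k, {r, k})) ` ({1..n} - {r})) = n - 1"
  proof -
    have "card ({1..n} - {r}) = n - 1" using r by (subst card_Diff_singleton) auto
    moreover have "inj_on (\<lambda>k. (k, {r, k})) ({1..n} - {r})" by (rule inj_onI) simp
    ultimately show ?thesis by (simp only: card_image)
  qed
  ultimately have "n - 1 \<le> card (NW n r)" using fin by (metis card_mono)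
  have "\<not> NW n r \<subseteq> Q"
  proof
    assume "NW n r \<subseteq> Q"
    then have "card (NW n r) \<le> card Q" using card_mono finite_subset[OF assms(4) fin] by blast
    with \<open>n - 1 \<le> card (NW n r)\<close> assms(1,5) show False by linarith
  qed
  then obtain p where p: "p \<in> NW n r" "p \<notin> Q" by auto
  then obtain m where m: "p = (m, {r, m})" "m \<noteq> r" "m \<in> {1..n}" using NW_char by blast
  have xy: "(r, {r, m}) \<in> Lverts n" "(m, {r, m}) \<in> Lverts n" "(r, {r, m}) \<noteq> (m, {r, m})"
    using inL r m by auto
  have "\<forall>q\<in>Q. int (Ldist n (r, {r, m}) q) - int (Ldist n (m, {r, m}) q) = -1"
  proof
    fix q assume q: "q \<in> Q"
    then obtain k where k: "q = (k, {r, k})" "k \<noteq> r" "k \<in> {1..n}" using NW_char assms(4) by blast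
    have "k \<noteq> m" using k m p q by auto
    then show "int (Ldist n (r, {r, m}) q) - int (Ldist n (m, {r, m}) q) = -1"
      using d2[OF r m(3) k(3) m(2) k(2)] d3[OF r m(3) k(3) m(2) k(2)] k by simp
  qed
  then show False using dr xy unfolding doubly_resolving_def by blast
qed

end
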